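(* Let $\mathcal C$ be a category of noncrossing $\{x,y\}$-coloured partitions ($x^{-1}=x$, $y^{-1}=y$) all of whose blocks have even size, and which contains a partition with a block of size at least four. If no block of any partition in $\mathcal C$ contains points of both colours, then $\mathcal C$ is a free product.
   Context: Colour sets and partitions: a colour set is a set $\mathcal A$ with an involution $a\mapsto a^{-1}$. For words $w,w'$ on $\mathcal A$, an element of $P^{\mathcal A}(w,w')$ is a partition of $|w|+|w'|$ points drawn as an upper row coloured (left to right) by $w$ and a lower row coloured by $w'$; its subsets are blocks. It is noncrossing if there are no four points $k_1<k_2<k_3<k_4$ (ordering: upper row left to right, then lower row right to left) with $k_1,k_3$ in one block and $k_2,k_4$ in a different block. Category operations: tensor product, composition (erasing middle points and closed loops), adjoint (reflection), rotation (moving an extreme point to the other row and replacing its colour $a$ by $a^{-1}$). A category of noncrossing partitions is a family $\mathcal C(w,w')\subset NC^{\mathcal A}(w,w')$ stable under these operations and containing $\pi(a,a)$ for all $a$. For a category $\mathcal C$ on $\{x,y\}$, $\mathcal C_x$ (resp. $\mathcal C_y$) is the set of partitions in $\mathcal C$ all of whose points are coloured $x$ (resp. $y$); $\mathcal C$ is a free product if it equals the category generated by $\mathcal C_x\cup\mathcal C_y$. *)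

theory Defs
  imports Main
begin

text \<open>Points of a partition: upper row points Up i (i < length of upper word, left to right)
  and lower row points Lo j (j < length of lower word, left to right).\<close>

datatype point = Up nat | Lo nat

record 'c part =
  upper :: "'c list"
  lower :: "'c list"
  blocks :: "point set set"

definition points_of :: "'c list \<Rightarrow> 'c list \<Rightarrow> point set" where
  "points_of w w' = {Up i | i. i < length w} \<union> {Lo j | j. j < length w'}"

definition points :: "'c part \<Rightarrow> point set" where
  "points p = points_of (upper p) (lower p)"

fun colour :: "'c part \<Rightarrow> point \<Rightarrow> 'c" where
  "colour p (Up i) = upper p ! i"
| "colour p (Lo j) = lower p ! j"

definition is_partition :: "'c part \<Rightarrow> bool" where
  "is_partition p \<longleftrightarrow>
     (\<forall>B\<in>blocks p. B \<noteq> {} \<and> B \<subseteq> points p) \<and>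
     (\<forall>B1\<in>blocks p. \<forall>B2\<in>blocks p. B1 \<noteq> B2 \<longrightarrow> B1 \<inter> B2 = {}) \<and>
     \<Union>(blocks p) = points p"

text \<open>Linear order of points: upper row left to right, then lower row right to left.\<close>
fun pos :: "'c part \<Rightarrow> point \<Rightarrow> nat" where
  "pos p (Up i) = i"
| "pos p (Lo j) = length (upper p) + (length (lower p) - 1 - j)"

definition noncrossing :: "'c part \<Rightarrow> bool" where
  "noncrossing p \<longleftrightarrow>
     (\<forall>B1\<in>blocks p. \<forall>B2\<in>blocks p. B1 \<noteq> B2 \<longrightarrow>
        \<not> (\<exists>k1\<in>B1. \<exists>k2\<in>B2. \<exists>k3\<in>B1. \<exists>k4\<in>B2.
              pos p k1 < pos p k2 \<and> pos p k2 < pos p k3 \<and> pos p k3 < pos p k4))"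

definition idp :: "'c \<Rightarrow> 'c part" where
  "idp a = \<lparr>upper = [a], lower = [a], blocks = {{Up 0, Lo 0}}\<rparr>"

fun shift :: "nat \<Rightarrow> nat \<Rightarrow> point \<Rightarrow> point" where
  "shift n m (Up i) = Up (i + n)"
| "shift n m (Lo j) = Lo (j + m)"

definition tensor :: "'c part \<Rightarrow> 'c part \<Rightarrow> 'c part" where
  "tensor p q = \<lparr>upper = upper p @ upper q, lower = lower p @ lower q,
     blocks = blocks p \<union> (image (shift (length (upper p)) (length (lower p)))) ` blocks q\<rparr>"

fun swap_pt :: "point \<Rightarrow> point" where
  "swap_pt (Up i) = Lo i"
| "swap_pt (Lo j) = Up j"

definition adjoint :: "'c part \<Rightarrow> 'c part" where
  "adjoint p = \<lparr>upper = lower p, lower = upper p, blocks = (image swap_pt) ` blocks p\<rparr>"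

text \<open>Composition: p on top, q below (requires lower p = upper q).  The lower points of p
  are identified with the upper points of q; blocks of the result are the connected
  components restricted to the outer points; components lying entirely in the middle
  (closed loops) are erased.\<close>

datatype lvl = T nat | M nat | Bt nat

fun emb_top :: "point \<Rightarrow> lvl" where
  "emb_top (Up i) = T i"
| "emb_top (Lo j) = M j"

fun emb_bot :: "point \<Rightarrow> lvl" where
  "emb_bot (Up j) = M j"
| "emb_bot (Lo k) = Bt k"

fun emb_out :: "point \<Rightarrow> lvl" where
  "emb_out (Up i) = T i"
| "emb_out (Lo k) = Bt k"

definition comp_rel :: "'c part \<Rightarrow> 'c part \<Rightarrow> (lvl \<times> lvl) set" where
  "comp_rel p q =
     {(emb_top u, emb_top v) | u v. \<exists>B\<in>blocks p. u \<in> B \<and> v \<in> B} \<union>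
     {(emb_bot u, emb_bot v) | u v. \<exists>B\<in>blocks q. u \<in> B \<and> v \<in> B}"

definition comp :: "'c part \<Rightarrow> 'c part \<Rightarrow> 'c part" where
  "comp p q = \<lparr>upper = upper p, lower = lower q,
     blocks = {{u \<in> points_of (upper p) (lower q). (emb_out v, emb_out u) \<in> (comp_rel p q)\<^sup>*}
               | v. v \<in> points_of (upper p) (lower q)}\<rparr>"

text \<open>Rotations: moving an extreme point to the other row, replacing its colour a by inv a.\<close>

fun rot_ul_pt :: "point \<Rightarrow> point" where
  "rot_ul_pt (Up 0) = Lo 0"
| "rot_ul_pt (Up (Suc i)) = Up i"
| "rot_ul_pt (Lo j) = Lo (Suc j)"

definition rot_ul :: "('c \<Rightarrow> 'c) \<Rightarrow> 'c part \<Rightarrow> 'c part" where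
  "rot_ul iv p = \<lparr>upper = tl (upper p), lower = iv (hd (upper p)) # lower p,
     blocks = (image rot_ul_pt) ` blocks p\<rparr>"

fun rot_ll_pt :: "point \<Rightarrow> point" where
  "rot_ll_pt (Lo 0) = Up 0"
| "rot_ll_pt (Lo (Suc j)) = Lo j"
| "rot_ll_pt (Up i) = Up (Suc i)"

definition rot_ll :: "('c \<Rightarrow> 'c) \<Rightarrow> 'c part \<Rightarrow> 'c part" where
  "rot_ll iv p = \<lparr>upper = iv (hd (lower p)) # upper p, lower = tl (lower p),
     blocks = (image rot_ll_pt) ` blocks p\<rparr>"

fun rot_ur_pt :: "nat \<Rightarrow> nat \<Rightarrow> point \<Rightarrow> point" where
  "rot_ur_pt n m (Up i) = (if i = n - 1 then Lo m else Up i)"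
| "rot_ur_pt n m (Lo j) = Lo j"

definition rot_ur :: "('c \<Rightarrow> 'c) \<Rightarrow> 'c part \<Rightarrow> 'c part" where
  "rot_ur iv p = \<lparr>upper = butlast (upper p), lower = lower p @ [iv (last (upper p))],
     blocks = (image (rot_ur_pt (length (upper p)) (length (lower p)))) ` blocks p\<rparr>"

fun rot_lr_pt :: "nat \<Rightarrow> nat \<Rightarrow> point \<Rightarrow> point" where
  "rot_lr_pt n m (Lo j) = (if j = m - 1 then Up n else Lo j)"
| "rot_lr_pt n m (Up i) = Up i"

definition rot_lr :: "('c \<Rightarrow> 'c) \<Rightarrow> 'c part \<Rightarrow> 'c part" where
  "rot_lr iv p = \<lparr>upper = upper p @ [iv (last (lower p))], lower = butlast (lower p),
     blocks = (image (rot_lr_pt (length (upper p)) (length (lower p)))) ` blocks p\<rparr>"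

definition is_category :: "('c \<Rightarrow> 'c) \<Rightarrow> 'c part set \<Rightarrow> bool" where
  "is_category iv C \<longleftrightarrow>
     (\<forall>p\<in>C. is_partition p \<and> noncrossing p) \<and>
     (\<forall>a. idp a \<in> C) \<and>
     (\<forall>p\<in>C. \<forall>q\<in>C. tensor p q \<in> C) \<and>
     (\<forall>p\<in>C. \<forall>q\<in>C. lower p = upper q \<longrightarrow> comp p q \<in> C) \<and>
     (\<forall>p\<in>C. adjoint p \<in> C) \<and>
     (\<forall>p\<in>C. upper p \<noteq> [] \<longrightarrow> rot_ul iv p \<in> C) \<and>
     (\<forall>p\<in>C. upper p \<noteq> [] \<longrightarrow> rot_ur iv p \<in> C) \<and>
     (\<forall>p\<in>C. lower p \<noteq> [] \<longrightarrow> rot_ll iv p \<in> C) \<and>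
     (\<forall>p\<in>C. lower p \<noteq> [] \<longrightarrow> rot_lr iv p \<in> C)"

inductive_set gen_cat :: "('c \<Rightarrow> 'c) \<Rightarrow> 'c part set \<Rightarrow> 'c part set" for iv S where
  base: "p \<in> S \<Longrightarrow> p \<in> gen_cat iv S"
| ident: "idp a \<in> gen_cat iv S"
| tens: "p \<in> gen_cat iv S \<Longrightarrow> q \<in> gen_cat iv S \<Longrightarrow> tensor p q \<in> gen_cat iv S"
| compo: "p \<in> gen_cat iv S \<Longrightarrow> q \<in> gen_cat iv S \<Longrightarrow> lower p = upper q \<Longrightarrow> comp p q \<in> gen_cat iv S"
| adj: "p \<in> gen_cat iv S \<Longrightarrow> adjoint p \<in> gen_cat iv S"
| rul: "p \<in> gen_cat iv S \<Longrightarrow> upper p \<noteq> [] \<Longrightarrow> rot_ul iv p \<in> gen_cat iv S"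
| rur: "p \<in> gen_cat iv S \<Longrightarrow> upper p \<noteq> [] \<Longrightarrow> rot_ur iv p \<in> gen_cat iv S"
| rll: "p \<in> gen_cat iv S \<Longrightarrow> lower p \<noteq> [] \<Longrightarrow> rot_ll iv p \<in> gen_cat iv S"
| rlr: "p \<in> gen_cat iv S \<Longrightarrow> lower p \<noteq> [] \<Longrightarrow> rot_lr iv p \<in> gen_cat iv S"

datatype col = X | Y

definition inv_xy :: "col \<Rightarrow> col" where
  "inv_xy c = c"

definition mono_part :: "col part set \<Rightarrow> col \<Rightarrow> col part set" where
  "mono_part C c = {p \<in> C. \<forall>u\<in>points p. colour p u = c}"

definition free_product :: "col part set \<Rightarrow> bool" where
  "free_product C \<longleftrightarrow> C = gen_cat inv_xy (mono_part C X \<union> mono_part C Y)"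

end

theory Submission
  imports Defs
begin


fun isUp :: "point \<Rightarrow> bool" where
  "isUp (Up i) = True" | "isUp (Lo j) = False"

lemma points_of_Up[simp]: "Up i \<in> points_of w w' \<longleftrightarrow> i < length w"
  by (auto simp: points_of_def)
lemma points_of_Lo[simp]: "Lo j \<in> points_of w w' \<longleftrightarrow> j < length w'"
  by (auto simp: points_of_def)

lemma emb_top_inj: "emb_top u = emb_top v \<Longrightarrow> u = v"
  by (cases u; cases v; simp)
lemma emb_bot_inj: "emb_bot u = emb_bot v \<Longrightarrow> u = v"
  by (cases u; cases v; simp)
lemma emb_top_bot: "isUp u \<Longrightarrow> emb_top u \<noteq> emb_bot v"
  by (cases u; cases v; simp)
lemma emb_bot_top: "\<not> isUp u \<Longrightarrow> emb_bot u \<noteq> emb_top v"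
  by (cases u; cases v; simp)
lemma emb_out_top: "isUp w \<Longrightarrow> emb_out u = emb_top w \<longleftrightarrow> u = w"
  by (cases u; cases w; simp)
lemma emb_out_bot: "\<not> isUp w \<Longrightarrow> emb_out u = emb_bot w \<longleftrightarrow> u = w"
  by (cases u; cases w; simp)

lemma part_disj: "is_partition p \<Longrightarrow> B1 \<in> blocks p \<Longrightarrow> B2 \<in> blocks p \<Longrightarrow> x \<in> B1 \<Longrightarrow> x \<in> B2 \<Longrightarrow> B1 = B2"
  unfolding is_partition_def by blast
lemma part_sub: "is_partition p \<Longrightarrow> B \<in> blocks p \<Longrightarrow> B \<subseteq> points p"
  unfolding is_partition_def by blast
lemma part_ne: "is_partition p \<Longrightarrow> B \<in> blocks p \<Longrightarrow> B \<noteq> {}"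
  unfolding is_partition_def by blast
lemma part_cov: "is_partition p \<Longrightarrow> x \<in> points p \<Longrightarrow> \<exists>B\<in>blocks p. x \<in> B"
  unfolding is_partition_def by blast

lemma cls_top:
  assumes pa: "is_partition a" and B: "B \<in> blocks a" and up: "\<forall>u\<in>B. isUp u" and x0: "x0 \<in> B"
  shows "{y. (emb_top x0, y) \<in> (comp_rel a b)\<^sup>*} = emb_top ` B"
proof
  show "{y. (emb_top x0, y) \<in> (comp_rel a b)\<^sup>*} \<subseteq> emb_top ` B"
  proof
    fix y assume "y \<in> {y. (emb_top x0, y) \<in> (comp_rel a b)\<^sup>*}"
    hence "(emb_top x0, y) \<in> (comp_rel a b)\<^sup>*" by simp
    thus "y \<in> emb_top ` B"
    proof (induction rule: rtrancl_induct)
      case base thus ?case using x0 by auto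
    next
      case (step y z)
      from step.IH obtain u' where u': "u' \<in> B" "y = emb_top u'" by auto
      from step.hyps(2) show ?case unfolding comp_rel_def
      proof (elim UnE)
        assume "(y, z) \<in> {(emb_top u, emb_top v) |u v. \<exists>B\<in>blocks a. u \<in> B \<and> v \<in> B}"
        then obtain u v B' where "y = emb_top u" "z = emb_top v" "B' \<in> blocks a" "u \<in> B'" "v \<in> B'" by blast
        moreover hence "u = u'" using u' emb_top_inj by metis
        ultimately show ?thesis using part_disj[OF pa B] u' by blast
      next
        assume "(y, z) \<in> {(emb_bot u, emb_bot v) |u v. \<exists>B\<in>blocks b. u \<in> B \<and> v \<in> B}"
        then obtain u where "y = emb_bot u" by blast
        thus ?thesis using u' up emb_top_bot by metis
      qed
    qed
  qed
next
  show "emb_top ` B \<subseteq> {y. (emb_top x0, y) \<in> (comp_rel a b)\<^sup>*}"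
  proof
    fix y assume "y \<in> emb_top ` B"
    then obtain u where "u \<in> B" "y = emb_top u" by auto
    hence "(emb_top x0, y) \<in> comp_rel a b" unfolding comp_rel_def using B x0 by blast
    thus "y \<in> {y. (emb_top x0, y) \<in> (comp_rel a b)\<^sup>*}" by auto
  qed
qed

lemma cls_bot:
  assumes pb: "is_partition b" and B: "B \<in> blocks b" and lo: "\<forall>u\<in>B. \<not> isUp u" and x0: "x0 \<in> B"
  shows "{y. (emb_bot x0, y) \<in> (comp_rel a b)\<^sup>*} = emb_bot ` B"
proof
  show "{y. (emb_bot x0, y) \<in> (comp_rel a b)\<^sup>*} \<subseteq> emb_bot ` B"
  proof
    fix y assume "y \<in> {y. (emb_bot x0, y) \<in> (comp_rel a b)\<^sup>*}"
    hence "(emb_bot x0, y) \<in> (comp_rel a b)\<^sup>*" by simp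
    thus "y \<in> emb_bot ` B"
    proof (induction rule: rtrancl_induct)
      case base thus ?case using x0 by auto
    next
      case (step y z)
      from step.IH obtain u' where u': "u' \<in> B" "y = emb_bot u'" by auto
      from step.hyps(2) show ?case unfolding comp_rel_def
      proof (elim UnE)
        assume "(y, z) \<in> {(emb_bot u, emb_bot v) |u v. \<exists>B\<in>blocks b. u \<in> B \<and> v \<in> B}"
        then obtain u v B' where "y = emb_bot u" "z = emb_bot v" "B' \<in> blocks b" "u \<in> B'" "v \<in> B'" by blast
        moreover hence "u = u'" using u' emb_bot_inj by metis
        ultimately show ?thesis using part_disj[OF pb B] u' by blast
      next
        assume "(y, z) \<in> {(emb_top u, emb_top v) |u v. \<exists>B\<in>blocks a. u \<in> B \<and> v \<in> B}"
        then obtain u where "y = emb_top u" by blast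
        thus ?thesis using u' lo emb_bot_top by metis
      qed
    qed
  qed
next
  show "emb_bot ` B \<subseteq> {y. (emb_bot x0, y) \<in> (comp_rel a b)\<^sup>*}"
  proof
    fix y assume "y \<in> emb_bot ` B"
    then obtain u where "u \<in> B" "y = emb_bot u" by auto
    hence "(emb_bot x0, y) \<in> comp_rel a b" unfolding comp_rel_def using B x0 by blast
    thus "y \<in> {y. (emb_bot x0, y) \<in> (comp_rel a b)\<^sup>*}" by auto
  qed
qed



lemma ntb:
  assumes pa: "is_partition a" and pb: "is_partition b" and ab: "lower a = upper b"
    and sa: "\<forall>B\<in>blocks a. (\<forall>u\<in>B. isUp u) \<or> (\<forall>u\<in>B. \<not> isUp u)"
    and sb: "\<forall>B\<in>blocks b. (\<forall>u\<in>B. isUp u) \<or> (\<forall>u\<in>B. \<not> isUp u)"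
  shows "comp a b = \<lparr>upper = upper a, lower = lower b,
     blocks = {B\<in>blocks a. \<forall>u\<in>B. isUp u} \<union> {B\<in>blocks b. \<forall>u\<in>B. \<not> isUp u}\<rparr>"
proof -
  let ?P = "points_of (upper a) (lower b)"
  let ?cls = "\<lambda>v. {u \<in> ?P. (emb_out v, emb_out u) \<in> (comp_rel a b)\<^sup>*}"
  have key: "\<exists>B. ?cls v = B \<and> v \<in> B \<and> ((B \<in> blocks a \<and> (\<forall>u\<in>B. isUp u)) \<or> (B \<in> blocks b \<and> (\<forall>u\<in>B. \<not> isUp u)))"
    if v: "v \<in> ?P" for v
  proof (cases v)
    case (Up i)
    hence "v \<in> points a" using v by (simp add: points_def)
    then obtain B where B: "B \<in> blocks a" "v \<in> B" using part_cov[OF pa] by blast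
    hence up: "\<forall>u\<in>B. isUp u" using sa Up by fastforce
    have "?cls v = B"
    proof -
      have e: "emb_out v = emb_top v" using Up by simp
      have "?cls v = {u \<in> ?P. emb_out u \<in> emb_top ` B}"
        using cls_top[OF pa B(1) up B(2), of b] e by auto
      also have "\<dots> = B"
      proof
        show "{u \<in> ?P. emb_out u \<in> emb_top ` B} \<subseteq> B"
          using emb_out_top up by (auto)
        show "B \<subseteq> {u \<in> ?P. emb_out u \<in> emb_top ` B}"
        proof
          fix u assume u: "u \<in> B"
          hence "u \<in> points a" using part_sub[OF pa B(1)] by auto
          moreover have "isUp u" using up u by auto
          ultimately have "u \<in> ?P" by (cases u) (auto simp: points_def)
          thus "u \<in> {u \<in> ?P. emb_out u \<in> emb_top ` B}" using u \<open>isUp u\<close> emb_out_top by blast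
        qed
      qed
      finally show ?thesis .
    qed
    thus ?thesis using B up by blast
  next
    case (Lo j)
    hence "v \<in> points b" using v by (simp add: points_def)
    then obtain B where B: "B \<in> blocks b" "v \<in> B" using part_cov[OF pb] by blast
    hence lo: "\<forall>u\<in>B. \<not> isUp u" using sb Lo by fastforce
    have "?cls v = B"
    proof -
      have e: "emb_out v = emb_bot v" using Lo by simp
      have "?cls v = {u \<in> ?P. emb_out u \<in> emb_bot ` B}"
        using cls_bot[OF pb B(1) lo B(2), of a] e by auto
      also have "\<dots> = B"
      proof
        show "{u \<in> ?P. emb_out u \<in> emb_bot ` B} \<subseteq> B"
          using emb_out_bot lo by (auto)
        show "B \<subseteq> {u \<in> ?P. emb_out u \<in> emb_bot ` B}"
        proof
          fix u assume u: "u \<in> B"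
          hence "u \<in> points b" using part_sub[OF pb B(1)] by auto
          moreover have "\<not> isUp u" using lo u by auto
          ultimately have "u \<in> ?P" by (cases u) (auto simp: points_def)
          thus "u \<in> {u \<in> ?P. emb_out u \<in> emb_bot ` B}" using u \<open>\<not> isUp u\<close> emb_out_bot by blast
        qed
      qed
      finally show ?thesis .
    qed
    thus ?thesis using B lo by blast
  qed
  have "{?cls v | v. v \<in> ?P} = {B\<in>blocks a. \<forall>u\<in>B. isUp u} \<union> {B\<in>blocks b. \<forall>u\<in>B. \<not> isUp u}"
  proof
    show "{?cls v | v. v \<in> ?P} \<subseteq> {B\<in>blocks a. \<forall>u\<in>B. isUp u} \<union> {B\<in>blocks b. \<forall>u\<in>B. \<not> isUp u}"
      using key by blast
  next
    show "{B\<in>blocks a. \<forall>u\<in>B. isUp u} \<union> {B\<in>blocks b. \<forall>u\<in>B. \<not> isUp u} \<subseteq> {?cls v | v. v \<in> ?P}"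
    proof
      fix B assume B: "B \<in> {B\<in>blocks a. \<forall>u\<in>B. isUp u} \<union> {B\<in>blocks b. \<forall>u\<in>B. \<not> isUp u}"
      show "B \<in> {?cls v | v. v \<in> ?P}"
      proof (cases "B \<in> blocks a \<and> (\<forall>u\<in>B. isUp u)")
        case True
        then obtain v where v: "v \<in> B" using part_ne[OF pa] by blast
        have "v \<in> points a" using part_sub[OF pa] True v by blast
        moreover have "isUp v" using True v by auto
        ultimately have vP: "v \<in> ?P" by (cases v) (auto simp: points_def)
        from key[OF vP] obtain B' where B': "?cls v = B'" "v \<in> B'"
          "(B' \<in> blocks a \<and> (\<forall>u\<in>B'. isUp u)) \<or> (B' \<in> blocks b \<and> (\<forall>u\<in>B'. \<not> isUp u))" by blast
        hence "B' = B" using part_disj[OF pa] True v \<open>isUp v\<close> by blast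
        thus ?thesis using B' vP by blast
      next
        case False
        hence Bb: "B \<in> blocks b" "\<forall>u\<in>B. \<not> isUp u" using B by auto
        then obtain v where v: "v \<in> B" using part_ne[OF pb] by blast
        have "v \<in> points b" using part_sub[OF pb] Bb v by blast
        moreover have "\<not> isUp v" using Bb v by auto
        ultimately have vP: "v \<in> ?P" by (cases v) (auto simp: points_def)
        from key[OF vP] obtain B' where B': "?cls v = B'" "v \<in> B'"
          "(B' \<in> blocks a \<and> (\<forall>u\<in>B'. isUp u)) \<or> (B' \<in> blocks b \<and> (\<forall>u\<in>B'. \<not> isUp u))" by blast
        hence "B' = B" using part_disj[OF pb] Bb v \<open>\<not> isUp v\<close> by blast
        thus ?thesis using B' vP by blast
      qed
    qed
  qed
  thus ?thesis unfolding comp_def by simp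
qed



lemma points_of_eq: "points_of w w' = Up ` {..<length w} \<union> Lo ` {..<length w'}"
  by (auto simp: points_of_def)
lemma finite_points[simp]: "finite (points p)"
  by (simp add: points_def points_of_eq)

lemma rec_eq: "upper p = upper q \<Longrightarrow> lower p = lower q \<Longrightarrow> blocks p = blocks q \<Longrightarrow> p = (q::'c part)"
  by (cases p; cases q; simp)

lemma inv_xy_id[simp]: "inv_xy c = c" by (simp add: inv_xy_def)

lemma img_id_on: "(\<And>x. x \<in> B \<Longrightarrow> f x = x) \<Longrightarrow> f ` B = B"
  by (simp add: image_cong[OF refl, of B f id, simplified])

lemma inv_ul: "upper p \<noteq> [] \<Longrightarrow> rot_ll inv_xy (rot_ul inv_xy p) = p"
proof (rule rec_eq)
  assume "upper p \<noteq> []"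
  thus "upper (rot_ll inv_xy (rot_ul inv_xy p)) = upper p" by (simp add: rot_ll_def rot_ul_def)
  show "lower (rot_ll inv_xy (rot_ul inv_xy p)) = lower p" by (simp add: rot_ll_def rot_ul_def)
  have e: "rot_ll_pt (rot_ul_pt x) = x" for x
    by (cases x rule: rot_ul_pt.cases) auto
  show "blocks (rot_ll inv_xy (rot_ul inv_xy p)) = blocks p"
    by (simp add: rot_ll_def rot_ul_def image_image e)
qed

lemma inv_ur:
  assumes "upper p \<noteq> []" "is_partition p"
  shows "rot_lr inv_xy (rot_ur inv_xy p) = p"
proof (rule rec_eq)
  show "upper (rot_lr inv_xy (rot_ur inv_xy p)) = upper p" using assms by (simp add: rot_lr_def rot_ur_def)
  show "lower (rot_lr inv_xy (rot_ur inv_xy p)) = lower p" by (simp add: rot_lr_def rot_ur_def)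
  have e: "rot_lr_pt (length (upper p) - 1) (Suc (length (lower p))) (rot_ur_pt (length (upper p)) (length (lower p)) x) = x"
    if "x \<in> points p" for x
    using that assms(1) by (cases x) (auto simp: points_def)
  have "\<And>B. B \<in> blocks p \<Longrightarrow> (\<lambda>x. rot_lr_pt (length (upper p) - 1) (Suc (length (lower p))) (rot_ur_pt (length (upper p)) (length (lower p)) x)) ` B = B"
    using e part_sub[OF assms(2)] by (meson img_id_on subsetD)
  thus "blocks (rot_lr inv_xy (rot_ur inv_xy p)) = blocks p"
    by (simp add: rot_lr_def rot_ur_def image_image)
qed

lemma inv_lr:
  assumes "lower p \<noteq> []" "is_partition p"
  shows "rot_ur inv_xy (rot_lr inv_xy p) = p"
proof (rule rec_eq)
  show "upper (rot_ur inv_xy (rot_lr inv_xy p)) = upper p" by (simp add: rot_lr_def rot_ur_def)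
  show "lower (rot_ur inv_xy (rot_lr inv_xy p)) = lower p" using assms by (simp add: rot_lr_def rot_ur_def)
  have e: "rot_ur_pt (Suc (length (upper p))) (length (lower p) - 1) (rot_lr_pt (length (upper p)) (length (lower p)) x) = x"
    if "x \<in> points p" for x
    using that assms(1) by (cases x) (auto simp: points_def)
  have "\<And>B. B \<in> blocks p \<Longrightarrow> (\<lambda>x. rot_ur_pt (Suc (length (upper p))) (length (lower p) - 1) (rot_lr_pt (length (upper p)) (length (lower p)) x)) ` B = B"
    using e part_sub[OF assms(2)] by (meson img_id_on subsetD)
  thus "blocks (rot_ur inv_xy (rot_lr inv_xy p)) = blocks p"
    by (simp add: rot_lr_def rot_ur_def image_image)
qed

lemma ur_block:
  assumes "Up ` {..<k} \<in> blocks p" "k < length (upper p)"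
  shows "Up ` {..<k} \<in> blocks (rot_ur iv p)"
proof -
  have "rot_ur_pt (length (upper p)) (length (lower p)) ` Up ` {..<k} = Up ` {..<k}"
    using assms(2) by (force simp: image_image)
  thus ?thesis using assms(1) unfolding rot_ur_def by (metis (no_types, lifting) image_eqI part.select_convs(3))
qed

lemma ul_block:
  assumes "Up ` {Suc a..<Suc a+k} \<in> blocks p"
  shows "Up ` {a..<a+k} \<in> blocks (rot_ul iv p)"
proof -
  have rul: "Suc a \<le> x \<Longrightarrow> rot_ul_pt (Up x) = Up (x - 1)" for x by (cases x) auto
  have "rot_ul_pt ` Up ` {Suc a..<Suc a+k} = Up ` {a..<a+k}"
  proof -
    have "rot_ul_pt ` Up ` {Suc a..<Suc a+k} = (\<lambda>j. Up (j - 1)) ` {Suc a..<Suc a+k}"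
      using rul by (auto simp: image_image intro!: image_cong)
    also have "\<dots> = Up ` ((\<lambda>j. j - 1) ` {Suc a..<Suc a+k})" by (simp add: image_image)
    also have "(\<lambda>j. j - 1) ` {Suc a..<Suc a+k} = {a..<a+k}"
    proof
      show "(\<lambda>j. j - 1) ` {Suc a..<Suc a+k} \<subseteq> {a..<a+k}" by auto
      show "{a..<a+k} \<subseteq> (\<lambda>j. j - 1) ` {Suc a..<Suc a+k}"
      proof
        fix x assume "x \<in> {a..<a+k}"
        thus "x \<in> (\<lambda>j. j - 1) ` {Suc a..<Suc a+k}" by (intro image_eqI[of _ _ "Suc x"]) auto
      qed
    qed
    finally show ?thesis .
  qed
  thus ?thesis using assms unfolding rot_ul_def by (metis (no_types, lifting) image_eqI part.select_convs(3))
qed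

lemma all_up: "is_partition p \<Longrightarrow> lower p = [] \<Longrightarrow> B \<in> blocks p \<Longrightarrow> \<forall>u\<in>B. isUp u"
  using part_sub by (fastforce simp: points_def points_of_def)
lemma all_lo: "is_partition p \<Longrightarrow> upper p = [] \<Longrightarrow> B \<in> blocks p \<Longrightarrow> \<forall>u\<in>B. \<not> isUp u"
  using part_sub by (fastforce simp: points_def points_of_def)

fun lc :: "col \<Rightarrow> nat \<Rightarrow> col part" where
  "lc c 0 = rot_ul inv_xy (idp c)"
| "lc c (Suc n) = tensor (lc c 0) (lc c n)"

lemma lc_words: "upper (lc c n) = [] \<and> lower (lc c n) = replicate (2*n+2) c"
  by (induction n) (auto simp: tensor_def rot_ul_def idp_def numeral_2_eq_2)



lemma contig:
  assumes pp: "is_partition p" and nc: "noncrossing p" and lo: "lower p = []" and ne: "points p \<noteq> {}"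
  shows "\<exists>a k. Up ` {a..<a+k} \<in> blocks p \<and> a + k \<le> length (upper p)"
proof -
  define sp where "sp B = Max (pos p ` B) - Min (pos p ` B)" for B
  obtain B0 where "B0 \<in> blocks p" using ne part_cov[OF pp] by blast
  then obtain B where B: "B \<in> blocks p" and minB: "\<And>B'. B' \<in> blocks p \<Longrightarrow> sp B \<le> sp B'"
    using ex_has_least_nat[of "\<lambda>B. B \<in> blocks p" B0 sp] by blast
  have upt: "\<And>u. u \<in> points p \<Longrightarrow> u = Up (pos p u) \<and> pos p u < length (upper p)"
    using lo by (auto simp: points_def points_of_def)
  have finB: "\<And>B. B \<in> blocks p \<Longrightarrow> finite B"
    using part_sub[OF pp] finite_points finite_subset by blast
  have neB: "\<And>B. B \<in> blocks p \<Longrightarrow> B \<noteq> {}" using part_ne[OF pp] by blast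
  have inB: "\<And>B u. B \<in> blocks p \<Longrightarrow> u \<in> B \<Longrightarrow> u = Up (pos p u) \<and> pos p u < length (upper p)"
    using part_sub[OF pp] upt by blast
  define lo' where "lo' = Min (pos p ` B)"
  define hi where "hi = Max (pos p ` B)"
  have fB: "finite (pos p ` B)" "pos p ` B \<noteq> {}" using finB[OF B] neB[OF B] by auto
  have lo_in: "Up lo' \<in> B"
  proof -
    have "lo' \<in> pos p ` B" unfolding lo'_def using fB by (rule Min_in)
    then obtain u where "u \<in> B" "pos p u = lo'" by auto
    thus ?thesis using inB[OF B] by metis
  qed
  have hi_in: "Up hi \<in> B"
  proof -
    have "hi \<in> pos p ` B" unfolding hi_def using fB by (rule Max_in)
    then obtain u where "u \<in> B" "pos p u = hi" by auto
    thus ?thesis using inB[OF B] by metis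
  qed
  have bnd: "\<And>u. u \<in> B \<Longrightarrow> lo' \<le> pos p u \<and> pos p u \<le> hi"
    unfolding lo'_def hi_def using fB by auto
  have hin: "hi < length (upper p)" using inB[OF B hi_in] by simp
  have "B = Up ` {lo'..<lo'+(hi + 1 - lo')}"
  proof
    show "B \<subseteq> Up ` {lo'..<lo'+(hi + 1 - lo')}"
    proof
      fix u assume u: "u \<in> B"
      thus "u \<in> Up ` {lo'..<lo'+(hi + 1 - lo')}" using inB[OF B u] bnd[OF u]
        by (intro image_eqI[of _ _ "pos p u"]) auto
    qed
  next
    show "Up ` {lo'..<lo'+(hi + 1 - lo')} \<subseteq> B"
    proof
      fix x assume "x \<in> Up ` {lo'..<lo'+(hi + 1 - lo')}"
      then obtain j where j: "x = Up j" "lo' \<le> j" "j \<le> hi" using bnd[OF lo_in] by auto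
      show "x \<in> B"
      proof (rule ccontr)
        assume xn: "x \<notin> B"
        have "x \<in> points p" using j hin by (simp add: points_def)
        then obtain B' where B': "B' \<in> blocks p" "x \<in> B'" using part_cov[OF pp] by blast
        have BB': "B \<noteq> B'" using xn B' by blast
        have disj: "\<And>u. u \<in> B' \<Longrightarrow> u \<notin> B" using part_disj[OF pp B B'(1)] BB' by blast
        have jl: "lo' < j" "j < hi" using j lo_in hi_in xn by (auto simp: le_less)
        show False
        proof (cases "\<exists>u\<in>B'. pos p u < lo' \<or> hi < pos p u")
          case True
          then obtain u where u: "u \<in> B'" "pos p u < lo' \<or> hi < pos p u" by blast
          have pl: "pos p (Up lo') = lo'" "pos p (Up hi) = hi" "pos p x = j" using j by auto
          from u(2) show False
          proof
            assume "pos p u < lo'"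
            hence "\<exists>k1\<in>B'. \<exists>k2\<in>B. \<exists>k3\<in>B'. \<exists>k4\<in>B. pos p k1 < pos p k2 \<and> pos p k2 < pos p k3 \<and> pos p k3 < pos p k4"
              using u(1) lo_in B'(2) hi_in pl jl by metis
            thus False using nc B B'(1) BB' unfolding noncrossing_def by metis
          next
            assume "hi < pos p u"
            hence "\<exists>k1\<in>B. \<exists>k2\<in>B'. \<exists>k3\<in>B. \<exists>k4\<in>B'. pos p k1 < pos p k2 \<and> pos p k2 < pos p k3 \<and> pos p k3 < pos p k4"
              using u(1) lo_in B'(2) hi_in pl jl by metis
            thus False using nc B B'(1) BB' unfolding noncrossing_def by metis
          qed
        next
          case False
          have fB': "finite (pos p ` B')" "pos p ` B' \<noteq> {}" using finB[OF B'(1)] neB[OF B'(1)] by auto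
          have r: "\<And>u. u \<in> B' \<Longrightarrow> lo' < pos p u \<and> pos p u < hi"
          proof -
            fix u assume u: "u \<in> B'"
            have "lo' \<le> pos p u" "pos p u \<le> hi" using False u by auto
            moreover have "pos p u \<noteq> lo'" "pos p u \<noteq> hi"
              using inB[OF B'(1) u] disj[OF u] lo_in hi_in by metis+
            ultimately show "lo' < pos p u \<and> pos p u < hi" by auto
          qed
          have "Max (pos p ` B') < hi" using r fB' by auto
          moreover have "lo' < Min (pos p ` B')" using r fB' by auto
          ultimately have "sp B' < sp B" unfolding sp_def lo'_def[symmetric] hi_def[symmetric]
            using Min_le[OF fB'(1) Max_in[OF fB']] by linarith
          thus False using minB[OF B'(1)] by simp
        qed
      qed
    qed
  qed
  moreover have "lo' + (hi + 1 - lo') \<le> length (upper p)" using hin bnd[OF lo_in] by simp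
  ultimately show ?thesis using B by blast
qed



declare inv_xy_id[simp del]

lemma shift_lo: "\<not> isUp x \<Longrightarrow> shift a 0 x = x" by (cases x) auto

context
  fixes C :: "col part set"
  assumes cat: "is_category inv_xy C"
    and even_blocks: "\<forall>p\<in>C. \<forall>B\<in>blocks p. even (card B)"
    and no_mixed: "\<forall>p\<in>C. \<forall>B\<in>blocks p. \<not> (\<exists>u\<in>B. \<exists>v\<in>B. colour p u = X \<and> colour p v = Y)"
begin

abbreviation "GG \<equiv> gen_cat inv_xy (mono_part C X \<union> mono_part C Y)"

lemma Cpart: "p \<in> C \<Longrightarrow> is_partition p" using cat unfolding is_category_def by blast
lemma Cnc: "p \<in> C \<Longrightarrow> noncrossing p" using cat unfolding is_category_def by blast
lemma Cid: "idp a \<in> C" using cat unfolding is_category_def by blast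
lemma Ctens: "p \<in> C \<Longrightarrow> q \<in> C \<Longrightarrow> tensor p q \<in> C" using cat unfolding is_category_def by blast
lemma Ccomp: "p \<in> C \<Longrightarrow> q \<in> C \<Longrightarrow> lower p = upper q \<Longrightarrow> comp p q \<in> C" using cat unfolding is_category_def by blast
lemma Cadj: "p \<in> C \<Longrightarrow> adjoint p \<in> C" using cat unfolding is_category_def by blast
lemma Cul: "p \<in> C \<Longrightarrow> upper p \<noteq> [] \<Longrightarrow> rot_ul inv_xy p \<in> C" using cat unfolding is_category_def by blast
lemma Cur: "p \<in> C \<Longrightarrow> upper p \<noteq> [] \<Longrightarrow> rot_ur inv_xy p \<in> C" using cat unfolding is_category_def by blast
lemma Clr: "p \<in> C \<Longrightarrow> lower p \<noteq> [] \<Longrightarrow> rot_lr inv_xy p \<in> C" using cat unfolding is_category_def by blast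

lemma lcC: "lc c n \<in> C"
proof (induction n)
  case 0
  show ?case using Cul[OF Cid, of c] by (simp add: idp_def)
next
  case (Suc n)
  have "lc c 0 \<in> C" using Cul[OF Cid, of c] by (simp add: idp_def)
  thus ?case using Ctens Suc by simp
qed

lemma GC: "p \<in> GG \<Longrightarrow> p \<in> C"
proof (induction rule: gen_cat.induct)
qed (use cat in \<open>auto simp: is_category_def mono_part_def\<close>)

lemma ext_ur:
  assumes IH: "\<forall>p'\<in>C. length (upper p') + length (lower p') < n \<longrightarrow> p' \<in> GG"
  shows "q \<in> C \<Longrightarrow> length (upper q) + length (lower q) = n \<Longrightarrow> Up ` {..<k} \<in> blocks q
    \<Longrightarrow> length (upper q) = k + d \<Longrightarrow> q \<in> GG"
proof (induction d arbitrary: q)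
  case 0
  let ?I = "Up ` {..<k}"
  have pq: "is_partition q" using Cpart 0 by blast
  have kpos: "k \<noteq> 0" using part_ne[OF pq "0.prems"(3)] by auto
  have sep: "\<forall>B\<in>blocks q. B = ?I \<or> (\<forall>u\<in>B. \<not> isUp u)"
  proof
    fix B assume B: "B \<in> blocks q"
    show "B = ?I \<or> (\<forall>u\<in>B. \<not> isUp u)"
    proof (cases "B = ?I")
      case False
      have "\<forall>u\<in>B. \<not> isUp u"
      proof
        fix u assume u: "u \<in> B"
        show "\<not> isUp u"
        proof (cases u)
          case (Up i)
          have "u \<in> points q" using part_sub[OF pq B] u by blast
          hence "u \<in> ?I" using Up "0.prems"(4) by (simp add: points_def)
          thus ?thesis using part_disj[OF pq B "0.prems"(3)] u False by blast
        qed simp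
      qed
      thus ?thesis by blast
    qed simp
  qed
  have sepq: "\<forall>B\<in>blocks q. (\<forall>u\<in>B. isUp u) \<or> (\<forall>u\<in>B. \<not> isUp u)" using sep by auto
  define c where "c = upper q ! 0"
  have cols: "upper q ! j = c" if "j < k" for j
  proof (rule ccontr)
    assume ne: "upper q ! j \<noteq> c"
    have I1: "Up j \<in> ?I" and I2: "Up 0 \<in> ?I" using that kpos by auto
    have nm: "\<not> (\<exists>u\<in>?I. \<exists>v\<in>?I. colour q u = X \<and> colour q v = Y)"
      using bspec[OF bspec[OF no_mixed "0.prems"(1)] "0.prems"(3)] .
    have cj: "colour q (Up j) = upper q ! j" and c0: "colour q (Up 0) = c" by (simp_all add: c_def)
    show False
    proof (cases c)
      case X
      hence "colour q (Up j) = Y" using ne cj by (cases "upper q ! j") auto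
      hence "\<exists>u\<in>?I. \<exists>v\<in>?I. colour q u = X \<and> colour q v = Y" using I1 I2 c0 X by blast
      thus False using nm by contradiction
    next
      case Y
      hence "colour q (Up j) = X" using ne cj by (cases "upper q ! j") auto
      hence "\<exists>u\<in>?I. \<exists>v\<in>?I. colour q u = X \<and> colour q v = Y" using I1 I2 c0 Y by blast
      thus False using nm by contradiction
    qed
  qed
  have uq: "upper q = replicate k c" using cols "0.prems"(4) by (simp add: list_eq_iff_nth_eq)
  have "card ?I = k" by (subst card_image) (auto simp: inj_on_def)
  hence ek: "even k" using even_blocks "0.prems"(1,3) by metis
  then obtain m where "k = 2*m" by (auto elim: evenE)
  hence h: "k = 2*(m - 1)+2" using kpos by simp
  define h where "h = m - 1"
  hence h: "k = 2*h+2" using h by simp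
  let ?L = "lc c h"
  have Lw: "upper ?L = []" "lower ?L = upper q" using lc_words[of c h] uq h by auto
  have pL: "is_partition ?L" using Cpart lcC by blast
  let ?Z = "comp ?L q"
  have ZC: "?Z \<in> C" using Ccomp lcC "0.prems"(1) Lw by blast
  have Zeq: "?Z = \<lparr>upper = [], lower = lower q, blocks = {B\<in>blocks ?L. \<forall>u\<in>B. isUp u} \<union> {B\<in>blocks q. \<forall>u\<in>B. \<not> isUp u}\<rparr>"
    using ntb[OF pL pq Lw(2)] sepq all_lo[OF pL Lw(1)] Lw(1) by simp
  have Lno: "{B\<in>blocks ?L. \<forall>u\<in>B. isUp u} = {}" using all_lo[OF pL Lw(1)] part_ne[OF pL] by fastforce
  have Zb: "blocks ?Z = {B\<in>blocks q. \<forall>u\<in>B. \<not> isUp u}" by (subst Zeq) (simp add: Lno)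
  let ?Zs = "adjoint ?Z"
  have ZsC: "?Zs \<in> C" using Cadj ZC by blast
  have pZs: "is_partition ?Zs" using Cpart ZsC by blast
  have Zsw: "upper ?Zs = lower q" "lower ?Zs = []" by (subst Zeq, simp add: adjoint_def)+
  let ?b = "comp q ?Zs"
  have bC: "?b \<in> C" using Ccomp "0.prems"(1) ZsC Zsw by metis
  have Zsno: "{B\<in>blocks ?Zs. \<forall>u\<in>B. \<not> isUp u} = {}" using all_up[OF pZs Zsw(2)] part_ne[OF pZs] by fastforce
  have beq: "?b = \<lparr>upper = upper q, lower = [], blocks = {B\<in>blocks q. \<forall>u\<in>B. isUp u}\<rparr>"
    using ntb[OF pq pZs Zsw(1)[symmetric]] sepq all_up[OF pZs Zsw(2)] Zsw(2) Zsno by simp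
  have bmono: "?b \<in> mono_part C c"
    unfolding mono_part_def using bC
  proof (intro CollectI conjI ballI)
    fix u assume "u \<in> points ?b"
    then obtain j where "u = Up j" "j < k" by (subst (asm) beq) (auto simp: points_def points_of_def uq)
    thus "colour ?b u = c" by (subst beq) (simp add: uq)
  qed
  have bG: "?b \<in> GG" by (rule gen_cat.base) (cases c; use bmono in auto)
  have "length (upper ?Z) + length (lower ?Z) < n" using "0.prems"(2,4) kpos Lw by (simp add: comp_def)
  hence ZG: "?Z \<in> GG" using IH ZC by blast
  have "tensor ?b ?Z = q"
  proof (rule rec_eq)
    show "upper (tensor ?b ?Z) = upper q" by (simp add: tensor_def, subst beq, subst Zeq, simp)
    show "lower (tensor ?b ?Z) = lower q" by (simp add: tensor_def, subst beq, subst Zeq, simp)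
    have sh: "image (shift (length (upper ?b)) (length (lower ?b))) ` blocks ?Z = blocks ?Z"
    proof -
      have "length (lower ?b) = 0" by (subst beq) simp
      moreover have "image (shift (length (upper ?b)) 0) B = B" if "B \<in> blocks ?Z" for B
      proof -
        have "\<forall>u\<in>B. \<not> isUp u" using Zb that by simp
        thus ?thesis by (intro img_id_on) (simp add: shift_lo)
      qed
      ultimately have "\<And>B. B \<in> blocks ?Z \<Longrightarrow> image (shift (length (upper ?b)) (length (lower ?b))) B = B"
        by simp
      thus ?thesis by simp
    qed
    have "blocks q = {B\<in>blocks q. \<forall>u\<in>B. isUp u} \<union> {B\<in>blocks q. \<forall>u\<in>B. \<not> isUp u}" using sepq by blast
    thus "blocks (tensor ?b ?Z) = blocks q" unfolding tensor_def using sh Zb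
      by (simp, subst beq, simp)
  qed
  thus "q \<in> GG" using gen_cat.tens[OF bG ZG] by simp
next
  case (Suc d)
  have pq: "is_partition q" using Cpart Suc by blast
  have ne: "upper q \<noteq> []" using Suc.prems(4) by auto
  let ?q = "rot_ur inv_xy q"
  have "?q \<in> C" using Cur Suc.prems(1) ne by blast
  moreover have "length (upper ?q) + length (lower ?q) = n" using Suc.prems(2) ne by (cases "upper q") (auto simp: rot_ur_def)
  moreover have "Up ` {..<k} \<in> blocks ?q" using ur_block[OF Suc.prems(3)] Suc.prems(4) by simp
  moreover have "length (upper ?q) = k + d" using Suc.prems(4) by (simp add: rot_ur_def)
  ultimately have "?q \<in> GG" using Suc.IH by blast
  moreover have "lower ?q \<noteq> []" by (simp add: rot_ur_def)
  ultimately have "rot_lr inv_xy ?q \<in> GG" by (rule gen_cat.rlr)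
  thus ?case using inv_ur[OF ne pq] by simp
qed

lemma ext_ul:
  assumes IH: "\<forall>p'\<in>C. length (upper p') + length (lower p') < n \<longrightarrow> p' \<in> GG"
  shows "q \<in> C \<Longrightarrow> length (upper q) + length (lower q) = n \<Longrightarrow> Up ` {a..<a+k} \<in> blocks q
    \<Longrightarrow> a + k \<le> length (upper q) \<Longrightarrow> q \<in> GG"
proof (induction a arbitrary: q)
  case 0
  have "{0..<0+k} = {..<k}" by auto
  hence "Up ` {..<k} \<in> blocks q" using 0 by simp
  thus ?case using ext_ur[OF IH, of q k "length (upper q) - k"] 0 by simp
next
  case (Suc a)
  have ne: "upper q \<noteq> []" using Suc.prems(4) by auto
  let ?q = "rot_ul inv_xy q"
  have "?q \<in> C" using Cul Suc.prems(1) ne by blast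
  moreover have "length (upper ?q) + length (lower ?q) = n" using Suc.prems(2) ne
    by (cases "upper q") (auto simp: rot_ul_def)
  moreover have "Up ` {a..<a+k} \<in> blocks ?q" using ul_block[OF Suc.prems(3)] .
  moreover have "a + k \<le> length (upper ?q)" using Suc.prems(4) by (simp add: rot_ul_def)
  ultimately have "?q \<in> GG" using Suc.IH by blast
  moreover have "lower ?q \<noteq> []" by (simp add: rot_ul_def)
  ultimately have "rot_ll inv_xy ?q \<in> GG" by (rule gen_cat.rll)
  thus ?case using inv_ul[OF ne] by simp
qed

lemma main: "p \<in> C \<Longrightarrow> p \<in> GG"
proof -
  have "\<forall>p\<in>C. length (upper p) + length (lower p) = n \<longrightarrow> p \<in> GG" for n
  proof (induction n rule: less_induct)
    case (less n)
    have IH: "\<forall>p'\<in>C. length (upper p') + length (lower p') < n \<longrightarrow> p' \<in> GG" using less by blast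
    have "p \<in> C \<Longrightarrow> length (upper p) + length (lower p) = n \<Longrightarrow> length (lower p) = m \<Longrightarrow> p \<in> GG" for m p
    proof (induction m arbitrary: p)
      case 0
      hence lo: "lower p = []" by simp
      have pp: "is_partition p" using Cpart 0 by blast
      show ?case
      proof (cases "points p = {}")
        case True
        hence "p \<in> mono_part C X" using 0 by (simp add: mono_part_def)
        thus ?thesis by (intro gen_cat.base) simp
      next
        case False
        then obtain a k where "Up ` {a..<a+k} \<in> blocks p" "a + k \<le> length (upper p)"
          using contig[OF pp Cnc[OF "0.prems"(1)] lo] by blast
        thus ?thesis using ext_ul[OF IH] "0.prems" by blast
      qed
    next
      case (Suc m)
      have ne: "lower p \<noteq> []" using Suc.prems(3) by auto
      have pp: "is_partition p" using Cpart Suc.prems(1) by blast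
      let ?q = "rot_lr inv_xy p"
      have "?q \<in> C" using Clr Suc.prems(1) ne by blast
      moreover have "length (upper ?q) + length (lower ?q) = n" using Suc.prems(2) ne
        by (cases "lower p" rule: rev_cases) (auto simp: rot_lr_def)
      moreover have "length (lower ?q) = m" using Suc.prems(3) by (simp add: rot_lr_def)
      ultimately have "?q \<in> GG" using Suc.IH by blast
      moreover have "upper ?q \<noteq> []" by (simp add: rot_lr_def)
      ultimately have "rot_ur inv_xy ?q \<in> GG" by (rule gen_cat.rur)
      thus ?case using inv_lr[OF ne pp] by simp
    qed
    thus ?case by blast
  qed
  thus "p \<in> C \<Longrightarrow> p \<in> GG" by blast
qed

end

theorem lemma6p2:
  fixes C :: "col part set"
  assumes cat: "is_category inv_xy C"
    and even_blocks: "\<forall>p\<in>C. \<forall>B\<in>blocks p. even (card B)"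
    and big_block: "\<exists>p\<in>C. \<exists>B\<in>blocks p. card B \<ge> 4"
    and no_mixed: "\<forall>p\<in>C. \<forall>B\<in>blocks p. \<not> (\<exists>u\<in>B. \<exists>v\<in>B. colour p u = X \<and> colour p v = Y)"
  shows "free_product C"
  unfolding free_product_def
  using main[OF cat even_blocks no_mixed] GC[OF cat even_blocks no_mixed] by blast


end
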